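(* Let $k\ge2$. For all $\ell\in[n]$ with $\ell\ge k^2+k$ and all $r\in\{0,1,\dots,k\}$, $$\mathbb{E}[v(\mathrm{ALG}^{\ge\ell}_r)]\ \ge\ \left(\frac{r\ell}{(k-1)n}-\frac{1}{k-1}\left(\frac{\ell}{n}\right)^k\sum_{r'=0}^{r-1}\sum_{i=0}^{r'}\frac{(k-1)^i}{i!}\ln^i\!\left(\frac{n}{\ell}\right)-\frac{3k^2r}{(k-1)n}\right)\alpha\, v(\mathrm{OPT}).$$
   Context: Submodular secretary setting. Let $U$ be a finite ground set of $n$ items and $k\ge1$ an integer. Let $v\colon 2^U\to\mathbb{R}_{\ge0}$ be monotone and submodular, and $\mathrm{OPT}\in\arg\max\{v(S): S\subseteq U, |S|\le k\}$. The items arrive one per round (rounds $1,\dots,n$) in a uniformly random order; for $\ell\in[n]$, $U^{\le \ell}$ denotes the set of items arriving in rounds $1,\dots,\ell$. $\mathcal{A}$ is an offline algorithm that, for every $L\subseteq U$, returns a set $\mathcal{A}(L)\subseteq L$ with $|\mathcal{A}(L)|\le k$ and $v(\mathcal{A}(L))\ge \alpha\max\{v(T):T\subseteq L,|T|\le k\}$, where $\alpha\in(0,1]$; $\mathcal{A}(L)$ depends only on the set $L$. Random sets $\mathrm{ALG}^{\ge\ell}_r\subseteq U$ for $\ell\in\{1,\dots,n+1\}$, $r\in\{0,\dots,k\}$ are defined recursively: $\mathrm{ALG}^{\ge\ell}_0=\emptyset$ for all $\ell$, $\mathrm{ALG}^{\ge n+1}_r=\emptyset$ for all $r$, and for $\ell\in[n]$,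 $r\ge1$, letting $j$ be the item arriving in round $\ell$: $\mathrm{ALG}^{\ge\ell}_r=\{j\}\cup\mathrm{ALG}^{\ge\ell+1}_{r-1}$ if $j\in\mathcal{A}(U^{\le\ell})$, and $\mathrm{ALG}^{\ge\ell}_r=\mathrm{ALG}^{\ge\ell+1}_{r}$ otherwise. *)

theory Defs
  imports "HOL-Probability.Probability"
begin

definition monotone_setfun :: "'a set \<Rightarrow> ('a set \<Rightarrow> real) \<Rightarrow> bool" where
  "monotone_setfun U v \<longleftrightarrow> (\<forall>S T. S \<subseteq> T \<and> T \<subseteq> U \<longrightarrow> v S \<le> v T)"

definition submodular_setfun :: "'a set \<Rightarrow> ('a set \<Rightarrow> real) \<Rightarrow> bool" where
  "submodular_setfun U v \<longleftrightarrow>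
     (\<forall>S T. S \<subseteq> U \<and> T \<subseteq> U \<longrightarrow> v (S \<union> T) + v (S \<inter> T) \<le> v S + v T)"

text \<open>An arrival order is a list xs enumerating U without repetition; the item arriving
  in round l (1-based) is xs ! (l - 1), and the set of items arrived in rounds 1..l is
  set (take l xs). The sets ALG^{>= l}_r are given by alg A xs l r (for 1 <= l <= n+1).\<close>

function alg :: "('a set \<Rightarrow> 'a set) \<Rightarrow> 'a list \<Rightarrow> nat \<Rightarrow> nat \<Rightarrow> 'a set" where
  "alg A xs l r =
     (if r = 0 \<or> l = 0 \<or> length xs < l then {}
      else (let j = xs ! (l - 1) in
            if j \<in> A (set (take l xs)) then insert j (alg A xs (l + 1) (r - 1))
            else alg A xs (l + 1) r))"
  by pat_completeness auto
termination
  by (relation "Wellfounded.measure (\<lambda>(A, xs, l, r). Suc (length xs) - l)") auto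

declare alg.simps [simp del]

end

theory Submission
  imports Defs "HOL-Probability.Probability"
begin


lemma exp_partial_le: "0 \<le> (x::real) \<Longrightarrow> (\<Sum>i\<le>m. x^i / fact i) \<le> exp x"
proof -
  assume x: "0 \<le> x"
  have s: "summable (\<lambda>n. x^n / fact n)" using summable_exp[of x] by (simp add: divide_inverse mult.commute)
  have e: "exp x = (\<Sum>n. x^n / fact n)" by (simp add: exp_def divide_inverse mult.commute)
  have "(\<Sum>i\<le>m. x^i / fact i) = (\<Sum>i<Suc m. x^i / fact i)" using lessThan_Suc_atMost by simp
  also have "\<dots> \<le> (\<Sum>n. x^n / fact n)" by (rule sum_le_suminf[OF s]) (auto simp: x)
  finally show ?thesis using e by simp
qed

definition Pe :: "nat \<Rightarrow> real \<Rightarrow> real" where "Pe m u = (\<Sum>i\<le>m. u^i / fact i)"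
definition Sr :: "nat \<Rightarrow> nat \<Rightarrow> real \<Rightarrow> real" where
  "Sr k r y = (\<Sum>r'<r. Pe r' ((real k - 1) * - ln y))"
definition hh :: "nat \<Rightarrow> nat \<Rightarrow> real \<Rightarrow> real" where
  "hh k r y = real r * y - y^k * Sr k r y"

lemma Pe_Suc: "Pe (Suc m) u = Pe m u + u^Suc m / fact (Suc m)"
  by (simp add: Pe_def)

lemma Pe_deriv: "(Pe m has_real_derivative (if m = 0 then 0 else Pe (m-1) u)) (at u)"
proof (induction m)
  case 0
  then show ?case by (simp add: Pe_def)
next
  case (Suc m)
  have d0: "((\<lambda>u. u^Suc m) has_real_derivative (real (Suc m) * u^m)) (at u)"
    using DERIV_pow[of "Suc m" u] by simp
  have d: "((\<lambda>u. u^Suc m / fact (Suc m)) has_real_derivative (real (Suc m) * u^m / fact (Suc m))) (at u)"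
    using DERIV_cdivide[OF d0, of "fact (Suc m)"] by simp
  have eq: "real (Suc m) * u^m / fact (Suc m) = u^m / fact m"
    by (simp add: fact_Suc)
  have "((\<lambda>u. Pe m u + u^Suc m / fact (Suc m)) has_real_derivative
     ((if m = 0 then 0 else Pe (m-1) u) + u^m / fact m)) (at u)"
    using DERIV_add[OF Suc.IH d] eq by simp
  moreover have "(if m = 0 then 0 else Pe (m-1) u) + u^m / fact m = Pe m u"
    by (cases m) (auto simp: Pe_def Pe_Suc)
  ultimately show ?case by (simp add: Pe_Suc[abs_def] Pe_Suc)
qed

lemma Sr_Suc: "Sr k (Suc r) y = Sr k r y + Pe r ((real k - 1) * - ln y)"
  by (simp add: Sr_def)

lemma Sr_deriv:
  assumes y: "0 < y"
  shows "((\<lambda>y. Sr k r y) has_real_derivative (- (real k - 1) / y * Sr k (r - 1) y)) (at y)"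
proof (induction r)
  case 0
  then show ?case by (simp add: Sr_def)
next
  case (Suc r)
  have g: "((\<lambda>y. (real k - 1) * - ln y) has_real_derivative ((real k - 1) * - (1/y))) (at y)"
    using y by (auto intro!: derivative_eq_intros)
  have c: "((\<lambda>y. Pe r ((real k - 1) * - ln y)) has_real_derivative
      (if r = 0 then 0 else Pe (r-1) ((real k - 1) * - ln y)) * ((real k - 1) * - (1/y))) (at y)"
    using DERIV_chain[OF Pe_deriv g] by (simp add: o_def)
  have "((\<lambda>y. Sr k r y + Pe r ((real k - 1) * - ln y)) has_real_derivative
     (- (real k - 1) / y * Sr k (r - 1) y + (if r = 0 then 0 else Pe (r-1) ((real k - 1) * - ln y)) * ((real k - 1) * - (1/y)))) (at y)"
    by (rule DERIV_add[OF Suc.IH c])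
  moreover have "- (real k - 1) / y * Sr k (r - 1) y + (if r = 0 then 0 else Pe (r-1) ((real k - 1) * - ln y)) * ((real k - 1) * - (1/y))
     = - (real k - 1) / y * Sr k (Suc r - 1) y"
  proof (cases r)
    case 0 then show ?thesis by (simp add: Sr_def)
  next
    case (Suc j)
    have "\<And>S P. - (real k - 1) / y * S + P * ((real k - 1) * - (1/y)) = - (real k - 1) / y * (S + P)"
      using y by (simp add: field_simps)
    then show ?thesis using Suc by (simp add: Sr_Suc)
  qed
  ultimately show ?case by (simp add: Sr_Suc)
qed

lemma hh_deriv:
  assumes y: "0 < y" and k: "k \<ge> 1"
  shows "((\<lambda>y. hh k r y) has_real_derivative
     (real r - real k * y^(k-1) * Sr k r y + (real k - 1) * y^(k-1) * Sr k (r-1) y)) (at y)"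
proof -
  have d: "((\<lambda>y. real r * y - y^k * Sr k r y) has_real_derivative
     (real r - (real k * y^(k-1) * Sr k r y + y^k * (- (real k - 1) / y * Sr k (r - 1) y)))) (at y)"
    by (auto intro!: derivative_eq_intros Sr_deriv[OF y])
  have "y^k = y * y^(k-1)" using k by (metis Suc_diff_le diff_Suc_1 power_Suc)
  then have e1: "y^k * (- (real k - 1) / y * Sr k (r - 1) y) = - (real k - 1) * y^(k-1) * Sr k (r-1) y"
    using y by (simp add: field_simps)
  have "real r - (real k * y^(k-1) * Sr k r y + y^k * (- (real k - 1) / y * Sr k (r - 1) y))
     = real r - real k * y^(k-1) * Sr k r y + (real k - 1) * y^(k-1) * Sr k (r-1) y" 
    by (subst e1) (simp add: algebra_simps)
  then show ?thesis using d unfolding hh_def by (metis (no_types, lifting) DERIV_cong)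
qed

lemma Pe_bound:
  assumes y: "0 < y" "y \<le> 1" and k: "k \<ge> 1"
  shows "0 \<le> y^(k-1) * Pe m ((real k - 1) * - ln y) \<and> y^(k-1) * Pe m ((real k - 1) * - ln y) \<le> 1"
proof -
  have u: "0 \<le> (real k - 1) * - ln y" using y k by (intro mult_nonneg_nonneg) auto
  have "Pe m ((real k - 1) * - ln y) \<le> exp ((real k - 1) * - ln y)"
    unfolding Pe_def by (rule exp_partial_le[OF u])
  also have "exp ((real k - 1) * - ln y) = (1/y)^(k-1)"
  proof -
    have "exp ((real k - 1) * - ln y) = exp (real (k-1) * ln (1/y))" using k y by (simp add: ln_div of_nat_diff)
    also have "\<dots> = (1/y)^(k-1)" using y by (simp add: exp_of_nat_mult)
    finally show ?thesis .
  qed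
  finally have a1: "Pe m ((real k - 1) * - ln y) \<le> (1/y)^(k-1)" .
  have a2: "y^(k-1) * Pe m ((real k - 1) * - ln y) \<le> y^(k-1) * (1/y)^(k-1)"
    using y a1 by (simp add: mult_left_mono)
  have a3: "y^(k-1) * (1/y)^(k-1) = 1" using y by (simp add: power_one_over field_simps)
  have "0 \<le> Pe m ((real k - 1) * - ln y)" unfolding Pe_def using u by (auto intro!: sum_nonneg)
  moreover have "0 \<le> y^(k-1)" using y by simp
  ultimately show ?thesis using a2 a3 by (simp del: power_one_over)
qed

lemma Sr_bound:
  assumes y: "0 < y" "y \<le> 1" and k: "k \<ge> 1"
  shows "0 \<le> y^(k-1) * Sr k r y \<and> y^(k-1) * Sr k r y \<le> real r"
proof -
  have "y^(k-1) * Sr k r y = (\<Sum>r'<r. y^(k-1) * Pe r' ((real k - 1) * - ln y))"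
    by (simp add: Sr_def sum_distrib_left)
  moreover have "(\<Sum>r'<r. y^(k-1) * Pe r' ((real k - 1) * - ln y)) \<le> (\<Sum>r'<r. 1)"
    by (rule sum_mono) (use Pe_bound[OF y k] in auto)
  moreover have "0 \<le> (\<Sum>r'<r. y^(k-1) * Pe r' ((real k - 1) * - ln y))"
    by (rule sum_nonneg) (use Pe_bound[OF y k] in auto)
  ultimately show ?thesis by simp
qed

definition hdv :: "nat \<Rightarrow> nat \<Rightarrow> real \<Rightarrow> real" where
  "hdv k r y = real r - real k * (y^(k-1) * Sr k r y) + (real k - 1) * (y^(k-1) * Sr k (r-1) y)"

lemma hh_deriv': "0 < y \<Longrightarrow> 1 \<le> k \<Longrightarrow> ((\<lambda>y. hh k r y) has_real_derivative hdv k r y) (at y)"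
  using hh_deriv[of y k r] unfolding hdv_def by (simp add: mult.assoc)

lemma hd_bound:
  assumes y: "0 < y" "y \<le> 1" and k: "k \<ge> 1"
  shows "\<bar>hdv k r y\<bar> \<le> real k * real r"
proof -
  define a where "a = y^(k-1) * Sr k r y"
  define b where "b = y^(k-1) * Sr k (r-1) y"
  have a: "0 \<le> a" "a \<le> real r" using Sr_bound[OF y k, of r] a_def by auto
  have b: "0 \<le> b" "b \<le> real r" using Sr_bound[OF y k, of "r-1"] b_def by auto
  have K: "0 \<le> real k - 1" using k by simp
  have "real k * a \<le> real k * real r" using a by (simp add: mult_left_mono)
  moreover have "0 \<le> real k * a" using a by simp
  moreover have "(real k - 1) * b \<le> (real k - 1) * real r" using b K by (simp add: mult_left_mono)
  moreover have "0 \<le> (real k - 1) * b" using b K by simp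
  moreover have "hdv k r y = real r - real k * a + (real k - 1) * b" unfolding hdv_def a_def b_def by simp
  moreover have "real k * real r = real r + (real k - 1) * real r" by (simp add: algebra_simps)
  ultimately show ?thesis using a unfolding abs_le_iff by linarith
qed

lemma hh_lip:
  assumes ab: "0 < a" "a \<le> b" "b \<le> 1" and k: "k \<ge> 1"
  shows "\<bar>hh k r b - hh k r a\<bar> \<le> real k * real r * (b - a)"
proof (cases "a = b")
  case True then show ?thesis by simp
next
  case False
  then have "a < b" using ab by simp
  then obtain z where z: "a < z" "z < b" "hh k r b - hh k r a = (b - a) * hdv k r z"
    using MVT2[of a b "hh k r" "hdv k r"] hh_deriv'[OF _ k] ab by force
  have "\<bar>hdv k r z\<bar> \<le> real k * real r" by (rule hd_bound) (use z ab k in auto)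
  then have "\<bar>(b - a) * hdv k r z\<bar> \<le> (b - a) * (real k * real r)"
    using ab by (simp add: abs_mult mult_left_mono)
  then show ?thesis using z by (simp add: mult.commute mult.left_commute)
qed

lemma hh_ode:
  assumes k: "k \<ge> 1" and r: "r \<ge> 1"
  shows "y * hdv k r y = real k * hh k r y - (real k - 1) * hh k (r-1) y - (real k - 1) * y"
proof -
  have yk: "y * y^(k-1) = y^k" using k by (metis Suc_diff_le diff_Suc_1 power_Suc)
  have rr: "real (r - 1) = real r - 1" using r by simp
  define S where "S = Sr k r y"
  define T where "T = Sr k (r-1) y"
  define z where "z = y^(k-1)"
  have "y * hdv k r y = real r * y - real k * ((y * z) * S) + (real k - 1) * ((y * z) * T)"
    unfolding hdv_def S_def T_def z_def by (simp add: algebra_simps)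
  also have "\<dots> = real r * y - real k * (y^k * S) + (real k - 1) * (y^k * T)"
    using yk z_def by simp
  also have "\<dots> = real k * hh k r y - (real k - 1) * hh k (r-1) y - (real k - 1) * y"
    unfolding hh_def S_def T_def rr by (simp add: algebra_simps)
  finally show ?thesis .
qed



lemma alg_subset: "alg A xs l r \<subseteq> set xs"
proof (induction A xs l r rule: alg.induct)
  case (1 A xs l r)
  show ?case
  proof (cases "r = 0 \<or> l = 0 \<or> length xs < l")
    case True then show ?thesis by (subst alg.simps) simp
  next
    case False
    then have j: "xs ! (l-1) \<in> set xs" by (auto intro!: nth_mem)
    show ?thesis using False 1 j by (subst alg.simps) (auto simp: Let_def)
  qed
qed

lemma alg_mono: "alg A xs l r \<subseteq> alg A xs l (Suc r)"
proof (induction A xs l r rule: alg.induct)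
  case (1 A xs l r)
  show ?case
  proof (cases "r = 0 \<or> l = 0 \<or> length xs < l")
    case True then show ?thesis by (subst alg.simps) simp
  next
    case False
    then have r: "Suc (r - 1) = r" by simp
    have e1: "alg A xs l r = (if xs ! (l-1) \<in> A (set (take l xs)) then insert (xs ! (l-1)) (alg A xs (l + 1) (r - 1))
            else alg A xs (l + 1) r)" using False by (subst alg.simps) (simp add: Let_def)
    have e2: "alg A xs l (Suc r) = (if xs ! (l-1) \<in> A (set (take l xs)) then insert (xs ! (l-1)) (alg A xs (l + 1) r)
            else alg A xs (l + 1) (Suc r))" using False by (subst alg.simps) (simp add: Let_def)
    show ?thesis using 1 False r unfolding e1 e2 by (auto simp: Let_def)
  qed
qed

lemma alg_local:
  "1 \<le> l \<Longrightarrow> length ys = length xs \<Longrightarrow>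
   (\<forall>i. l \<le> i \<longrightarrow> i \<le> length xs \<longrightarrow> set (take i ys) = set (take i xs) \<and> ys ! (i-1) = xs ! (i-1))
   \<Longrightarrow> alg A ys l r = alg A xs l r"
proof (induction A xs l r rule: alg.induct)
  case (1 A xs l r)
  show ?case
  proof (cases "r = 0 \<or> l = 0 \<or> length xs < l")
    case True then show ?thesis using 1(3,4) by (subst (1 2) alg.simps) simp
  next
    case False
    have h: "set (take l ys) = set (take l xs)" "ys ! (l-1) = xs ! (l-1)" using 1(5) False by auto
    have e1: "alg A xs l r = (if xs ! (l-1) \<in> A (set (take l xs)) then insert (xs ! (l-1)) (alg A xs (l + 1) (r - 1))
            else alg A xs (l + 1) r)" using False by (subst alg.simps) (simp add: Let_def)
    have e2: "alg A ys l r = (if xs ! (l-1) \<in> A (set (take l xs)) then insert (xs ! (l-1)) (alg A ys (l + 1) (r - 1))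
            else alg A ys (l + 1) r)" using False 1(4) h by (subst alg.simps) (simp add: Let_def)
    have p: "\<forall>i. l + 1 \<le> i \<longrightarrow> i \<le> length xs \<longrightarrow> set (take i ys) = set (take i xs) \<and> ys ! (i-1) = xs ! (i-1)"
      using 1(5) by auto
    show ?thesis unfolding e1 e2 using 1(1,2) False p 1(4) by (auto simp: Let_def)
  qed
qed

definition sw :: "nat \<Rightarrow> nat \<Rightarrow> 'a list \<Rightarrow> 'a list" where
  "sw p q xs = xs[p := xs ! q, q := xs ! p]"

lemma sw_length[simp]: "length (sw p q xs) = length xs" by (simp add: sw_def)

lemma sw_nth: "p < length xs \<Longrightarrow> q < length xs \<Longrightarrow>
  sw p q xs ! i = (if i = q then xs ! p else if i = p then xs ! q else xs ! i)"
  by (simp add: sw_def nth_list_update)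

lemma sw_sw: "p < length xs \<Longrightarrow> q < length xs \<Longrightarrow> sw p q (sw p q xs) = xs"
  by (rule nth_equalityI) (auto simp: sw_nth)

lemma sw_perm: "xs \<in> permutations_of_set U \<Longrightarrow> p < length xs \<Longrightarrow> q < length xs \<Longrightarrow>
   sw p q xs \<in> permutations_of_set U"
  by (auto simp: permutations_of_set_def sw_def)

lemma sw_take: "p < i \<Longrightarrow> q < i \<Longrightarrow> i \<le> length xs \<Longrightarrow> set (take i (sw p q xs)) = set (take i xs)"
proof -
  assume a: "p < i" "q < i" "i \<le> length xs"
  have "take i (sw p q xs) = (take i xs)[p := take i xs ! q, q := take i xs ! p]"
    using a by (simp add: sw_def take_update_swap)
  then show ?thesis by (simp only:) (rule set_swap, use a in auto)
qed

lemma sum_sw: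
  assumes fin: "finite U" and pq: "p < card U" "q < card U"
  shows "(\<Sum>xs\<in>permutations_of_set U. f (sw p q xs)) = (\<Sum>xs\<in>permutations_of_set U. f xs)"
proof -
  have len: "\<And>xs. xs \<in> permutations_of_set U \<Longrightarrow> length xs = card U"
    by (rule length_finite_permutations_of_set)
  show ?thesis
    by (rule sum.reindex_bij_witness[where i = "sw p q" and j = "sw p q"])
       (use pq len in \<open>auto simp: sw_sw intro: sw_perm\<close>)
qed

lemma sum_take_nth:
  assumes "distinct xs" "l \<le> length xs"
  shows "(\<Sum>j\<in>set (take l xs). f j) = (\<Sum>p<l. f (xs ! p))"
proof -
  have d: "distinct (take l xs)" using assms by simp
  have "(\<Sum>j\<in>set (take l xs). f j) = sum_list (map f (take l xs))"
    using d by (simp add: sum_list_distinct_conv_sum_set)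
  also have "\<dots> = (\<Sum>p<length (take l xs). f (take l xs ! p))"
    by (simp add: sum_list_sum_nth atLeast0LessThan)
  also have "\<dots> = (\<Sum>p<l. f (xs ! p))" using assms by simp
  finally show ?thesis .
qed

lemma Pe_zero: "Pe m 0 = 1"
  by (induction m) (simp_all add: Pe_Suc, simp add: Pe_def)

lemma hh_zero_r: "hh k 0 y = 0" by (simp add: hh_def Sr_def)

lemma hh_one: "hh k r 1 = 0" by (simp add: hh_def Sr_def Pe_zero)

lemma key_ineq:
  fixes l n k r :: nat
  assumes k: "k \<ge> 2" and r: "r \<ge> 1" and lk: "k \<le> l" and ln: "l < n"
  shows "real l * (hh k r (real l / real n) - 3 * real k ^ 2 * real r / real n)
    \<le> (real l - real k) * (hh k r (real (l+1) / real n) - 3 * real k ^ 2 * real r / real n)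
      + (real k - 1) * (hh k (r-1) (real (l+1) / real n) - 3 * real k ^ 2 * real (r-1) / real n)
      + (real k - 1) * real l / real n"
proof -
  define x where "x = real l / real n"
  define x' where "x' = real (l+1) / real n"
  define K where "K = real k - 1"
  have n0: "0 < real n" using ln by simp
  have l0: "0 < real l" using lk k by simp
  have x0: "0 < x" using n0 l0 x_def by simp
  have xx: "x < x'" using n0 unfolding x_def x'_def by (simp add: divide_strict_right_mono)
  have x1: "x' \<le> 1" using ln n0 unfolding x'_def by simp
  have k1: "k \<ge> 1" using k by simp
  obtain \<eta> where e: "x < \<eta>" "\<eta> < x'" "hh k r x' - hh k r x = (x' - x) * hdv k r \<eta>"
    using MVT2[of x x' "hh k r" "hdv k r"] hh_deriv'[OF _ k1] xx x0 by force
  define d where "d = hdv k r \<eta>"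
  define hx where "hx = hh k r x"
  define hx' where "hx' = hh k r x'"
  define gx' where "gx' = hh k (r-1) x'"
  define h\<eta> where "h\<eta> = hh k r \<eta>"
  define g\<eta> where "g\<eta> = hh k (r-1) \<eta>"
  have nx: "real n * x = real l" unfolding x_def using n0 by simp
  have nx': "real n * x' = real l + 1" unfolding x'_def using n0 by simp
  have n1: "real n * (x' - x) = 1" using nx nx' by (simp add: algebra_simps)
  have "real n * (hx' - hx) = (real n * (x' - x)) * d" using e(3) unfolding hx'_def hx_def d_def
    by simp
  then have mvt: "real n * (hx' - hx) = d" using n1 by simp
  have ode: "\<eta> * d = real k * h\<eta> - K * g\<eta> - K * \<eta>"
    unfolding d_def h\<eta>_def g\<eta>_def K_def by (rule hh_ode[OF k1 r])
  define ee where "ee = real l - real n * \<eta>"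
  define p where "p = real n * (hx' - h\<eta>)"
  define q where "q = real n * (gx' - g\<eta>)"
  have rr: "real (r - 1) = real r - 1" using r by simp
  have ident: "real n * (((real l - real k) * (hx' - 3 * real k ^ 2 * real r / real n)
      + K * (gx' - 3 * real k ^ 2 * (real r - 1) / real n)
      + K * real l / real n) - real l * (hx - 3 * real k ^ 2 * real r / real n))
    = ee * d - real k * p + K * q + K * ee + 3 * real k ^ 2 * (real r + K)"
  proof -
    have "real n * (((real l - real k) * (hx' - 3 * real k ^ 2 * real r / real n)
      + K * (gx' - 3 * real k ^ 2 * (real r - 1) / real n)
      + K * real l / real n) - real l * (hx - 3 * real k ^ 2 * real r / real n))
      = real l * (real n * (hx' - hx)) - real k * real n * hx' + K * real n * gx' + K * real l
        + 3 * real k ^ 2 * (real k * real r - K * (real r - 1))"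
      using n0 by (simp add: field_simps)
    also have "\<dots> = ee * d + real n * (\<eta> * d) - real k * real n * hx' + K * real n * gx' + K * real l
        + 3 * real k ^ 2 * (real k * real r - K * (real r - 1))"
      unfolding mvt ee_def by (simp add: algebra_simps)
    also have "\<dots> = ee * d - real k * p + K * q + K * ee + 3 * real k ^ 2 * (real r + K)"
      unfolding ode p_def q_def ee_def K_def by (simp add: algebra_simps)
    finally show ?thesis .
  qed
  have eb: "-1 \<le> ee" "ee \<le> 0"
  proof -
    have "real n * x < real n * \<eta>" "real n * \<eta> < real n * x'" using e n0 by simp_all
    then show "-1 \<le> ee" "ee \<le> 0" using nx nx' ee_def by linarith+
  qed
  have db: "\<bar>d\<bar> \<le> real k * real r" unfolding d_def by (rule hd_bound) (use e x0 x1 k1 in auto)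
  have t1: "ee * d \<ge> - (real k * real r)"
  proof -
    have "\<bar>ee * d\<bar> \<le> 1 * (real k * real r)" unfolding abs_mult
      by (rule mult_mono) (use eb db in auto)
    then show ?thesis by (simp add: abs_le_iff)
  qed
  have nd: "real n * (x' - \<eta>) \<le> 1" using nx nx' eb ee_def by (simp add: algebra_simps)
  have nd0: "0 \<le> real n * (x' - \<eta>)" using e n0 by simp
  have pb: "p \<le> real k * real r"
  proof -
    have "\<bar>hx' - h\<eta>\<bar> \<le> real k * real r * (x' - \<eta>)" unfolding hx'_def h\<eta>_def
      by (rule hh_lip) (use e x0 x1 k1 in auto)
    then have "real n * \<bar>hx' - h\<eta>\<bar> \<le> real n * (real k * real r * (x' - \<eta>))"
      using n0 by (intro mult_left_mono) auto
    also have "\<dots> = real k * real r * (real n * (x' - \<eta>))" by (simp add: algebra_simps)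
    also have "\<dots> \<le> real k * real r * 1" using nd by (intro mult_left_mono) auto
    finally have H: "real n * \<bar>hx' - h\<eta>\<bar> \<le> real k * real r" by simp
    have "real n * (hx' - h\<eta>) \<le> real n * \<bar>hx' - h\<eta>\<bar>" using n0 by (intro mult_left_mono) auto
    then show ?thesis unfolding p_def using H by linarith
  qed
  have qb: "q \<ge> - (real k * real r)"
  proof -
    have "\<bar>gx' - g\<eta>\<bar> \<le> real k * real (r-1) * (x' - \<eta>)" unfolding gx'_def g\<eta>_def
      by (rule hh_lip) (use e x0 x1 k1 in auto)
    also have "\<dots> \<le> real k * real r * (x' - \<eta>)" using e by (intro mult_right_mono mult_left_mono) auto
    finally have "real n * \<bar>gx' - g\<eta>\<bar> \<le> real n * (real k * real r * (x' - \<eta>))"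
      using n0 by (intro mult_left_mono) auto
    also have "\<dots> = real k * real r * (real n * (x' - \<eta>))" by (simp add: algebra_simps)
    also have "\<dots> \<le> real k * real r * 1" using nd by (intro mult_left_mono) auto
    finally have H: "real n * \<bar>gx' - g\<eta>\<bar> \<le> real k * real r" by simp
    have "real n * (- \<bar>gx' - g\<eta>\<bar>) \<le> real n * (gx' - g\<eta>)" using n0 by (intro mult_left_mono) auto
    then show ?thesis unfolding q_def using H by linarith
  qed
  have K0: "0 \<le> K" using k K_def by simp
  have t2: "real k * p \<le> real k * (real k * real r)" using mult_left_mono[OF pb, of "real k"] by simp
  have t3: "K * q \<ge> K * (- (real k * real r))" using mult_left_mono[OF qb K0] by simp
  have t4: "K * ee \<ge> - K" using mult_left_mono[OF eb(1) K0] by simp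
  have fin: "- (real k * real r) - real k * (real k * real r) + K * (- (real k * real r)) - K
     + 3 * real k ^ 2 * (real r + K) = real k ^ 2 * real r + K * (3 * real k ^ 2 - 1)"
    unfolding K_def by (simp add: algebra_simps power2_eq_square)
  have fin0: "0 \<le> real k ^ 2 * real r + K * (3 * real k ^ 2 - 1)"
  proof -
    have "1 \<le> real k ^ 2" using k by (simp add: one_le_power)
    then show ?thesis using K0 by (intro add_nonneg_nonneg mult_nonneg_nonneg) auto
  qed
  have "0 \<le> real n * (((real l - real k) * (hx' - 3 * real k ^ 2 * real r / real n)
      + K * (gx' - 3 * real k ^ 2 * (real r - 1) / real n)
      + K * real l / real n) - real l * (hx - 3 * real k ^ 2 * real r / real n))"
    unfolding ident using t1 t2 t3 t4 fin fin0 by linarith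
  then have "0 \<le> ((real l - real k) * (hx' - 3 * real k ^ 2 * real r / real n)
      + K * (gx' - 3 * real k ^ 2 * (real r - 1) / real n)
      + K * real l / real n) - real l * (hx - 3 * real k ^ 2 * real r / real n)"
    using n0 by (auto simp: zero_le_mult_iff)
  then show ?thesis unfolding hx_def hx'_def gx'_def K_def x_def x'_def rr by linarith
qed


locale sm =
  fixes U :: "'a set" and k :: nat and v :: "'a set \<Rightarrow> real"
    and A :: "'a set \<Rightarrow> 'a set" and \<alpha> :: real and OPT :: "'a set"
  assumes finU: "finite U"
    and k2: "k \<ge> 2"
    and v_nonneg: "\<And>S. S \<subseteq> U \<Longrightarrow> v S \<ge> 0"
    and v_mono: "monotone_setfun U v"
    and v_sub: "submodular_setfun U v"
    and OPT_sub: "OPT \<subseteq> U" and OPT_card: "card OPT \<le> k"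
    and \<alpha>_pos: "0 < \<alpha>"
    and A_sub: "\<And>L. L \<subseteq> U \<Longrightarrow> A L \<subseteq> L"
    and A_card: "\<And>L. L \<subseteq> U \<Longrightarrow> card (A L) \<le> k"
    and A_approx: "\<And>L T. L \<subseteq> U \<Longrightarrow> T \<subseteq> L \<Longrightarrow> card T \<le> k \<Longrightarrow> v (A L) \<ge> \<alpha> * v T"
begin

abbreviation "P \<equiv> permutations_of_set U"

lemma mono': "S \<subseteq> T \<Longrightarrow> T \<subseteq> U \<Longrightarrow> v S \<le> v T"
  using v_mono unfolding monotone_setfun_def by blast

lemma sub': "S \<subseteq> U \<Longrightarrow> T \<subseteq> U \<Longrightarrow> v (S \<union> T) + v (S \<inter> T) \<le> v S + v T"
  using v_sub unfolding submodular_setfun_def by blast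

lemma permD: assumes "xs \<in> P" shows "set xs = U" "distinct xs" "length xs = card U"
  using assms permutations_of_setD length_finite_permutations_of_set by auto

lemma submod_sum:
  assumes "finite a" "a \<subseteq> U" "S \<subseteq> U"
  shows "v (a \<union> S) - v S \<le> (\<Sum>j\<in>a. v (insert j S) - v S)"
  using assms(1,2)
proof (induction a rule: finite_induct)
  case empty then show ?case by simp
next
  case (insert b a0)
  have X: "insert b S \<subseteq> U" "a0 \<union> S \<subseteq> U" using insert assms(3) by auto
  have u: "insert b S \<union> (a0 \<union> S) = insert b a0 \<union> S" by auto
  have i: "insert b S \<inter> (a0 \<union> S) = S" using insert(2) by auto
  have "v (insert b a0 \<union> S) + v S \<le> v (insert b S) + v (a0 \<union> S)"
    using sub'[OF X] u i by simp
  moreover have "v (a0 \<union> S) - v S \<le> (\<Sum>j\<in>a0. v (insert j S) - v S)" using insert by auto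
  ultimately show ?case using insert(1,2) by simp
qed

lemma exch:
  fixes g :: "'a list \<Rightarrow> 'a \<Rightarrow> real"
  assumes l: "1 \<le> l" "l \<le> card U"
    and inv: "\<And>xs p j. xs \<in> P \<Longrightarrow> p < l \<Longrightarrow> g (sw p (l-1) xs) j = g xs j"
  shows "real l * (\<Sum>xs\<in>P. g xs (xs ! (l-1))) = (\<Sum>xs\<in>P. \<Sum>j\<in>set (take l xs). g xs j)"
proof -
  have eq: "(\<Sum>xs\<in>P. g xs (xs ! p)) = (\<Sum>xs\<in>P. g xs (xs ! (l-1)))" if p: "p < l" for p
  proof -
    have "(\<Sum>xs\<in>P. g xs (xs ! p)) = (\<Sum>xs\<in>P. g (sw p (l-1) xs) (sw p (l-1) xs ! p))"
      using sum_sw[OF finU, of p "l-1" "\<lambda>ys. g ys (ys ! p)"] p l by simp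
    also have "\<dots> = (\<Sum>xs\<in>P. g xs (xs ! (l-1)))"
    proof (rule sum.cong)
      fix xs assume xs: "xs \<in> P"
      have "sw p (l-1) xs ! p = xs ! (l-1)" using p l permD[OF xs] by (simp add: sw_nth)
      then show "g (sw p (l-1) xs) (sw p (l-1) xs ! p) = g xs (xs ! (l-1))" using inv[OF xs p] by simp
    qed simp
    finally show ?thesis .
  qed
  have "(\<Sum>xs\<in>P. \<Sum>j\<in>set (take l xs). g xs j) = (\<Sum>xs\<in>P. \<Sum>p<l. g xs (xs ! p))"
  proof (rule sum.cong)
    fix xs assume xs: "xs \<in> P"
    show "(\<Sum>j\<in>set (take l xs). g xs j) = (\<Sum>p<l. g xs (xs ! p))"
      by (rule sum_take_nth) (use permD[OF xs] l in auto)
  qed simp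
  also have "\<dots> = (\<Sum>p<l. \<Sum>xs\<in>P. g xs (xs ! p))" by (rule sum.swap)
  also have "\<dots> = (\<Sum>p<l. \<Sum>xs\<in>P. g xs (xs ! (l-1)))" by (rule sum.cong[OF refl]) (rule eq, simp)
  also have "\<dots> = real l * (\<Sum>xs\<in>P. g xs (xs ! (l-1)))" by simp
  finally show ?thesis by simp
qed

lemma incl:
  assumes ob: "ob \<in> U" and l: "l \<le> card U"
  shows "(\<Sum>xs\<in>P. (if ob \<in> set (take l xs) then 1 else 0 :: real)) = real l * real (card P) / real (card U)"
proof -
  define c where "c p = (\<Sum>xs\<in>P. (if xs ! p = ob then 1 else 0 :: real))" for p
  have n0: "0 < card U" using ob finU card_gt_0_iff by blast
  have cp: "c p = c 0" if p: "p < card U" for p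
  proof -
    have "c 0 = (\<Sum>xs\<in>P. (if sw p 0 xs ! 0 = ob then 1 else 0 :: real))"
      unfolding c_def using sum_sw[OF finU p n0, of "\<lambda>ys. (if ys ! 0 = ob then 1 else 0 :: real)"] by simp
    also have "\<dots> = c p" unfolding c_def
    proof (rule sum.cong)
      fix xs assume xs: "xs \<in> P"
      have "sw p 0 xs ! 0 = xs ! p" using p n0 permD(3)[OF xs] by (simp add: sw_nth)
      then show "(if sw p 0 xs ! 0 = ob then 1 else 0 :: real) = (if xs ! p = ob then 1 else 0)" by simp
    qed simp
    finally show ?thesis by simp
  qed
  have gen: "(\<Sum>xs\<in>P. (if ob \<in> set (take m xs) then 1 else 0 :: real)) = real m * c 0" if m: "m \<le> card U" for m
  proof -
    have "(\<Sum>xs\<in>P. (if ob \<in> set (take m xs) then 1 else 0 :: real)) = (\<Sum>xs\<in>P. \<Sum>p<m. (if xs ! p = ob then 1 else 0 :: real))"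
    proof (rule sum.cong)
      fix xs assume xs: "xs \<in> P"
      have "(\<Sum>j\<in>set (take m xs). (if j = ob then 1 else 0 :: real)) = (\<Sum>p<m. (if xs ! p = ob then 1 else 0 :: real))"
        by (rule sum_take_nth) (use permD[OF xs] m in auto)
      moreover have "(\<Sum>j\<in>set (take m xs). (if j = ob then 1 else 0 :: real)) = (if ob \<in> set (take m xs) then 1 else 0)"
        by (rule sum.delta) simp
      ultimately show "(if ob \<in> set (take m xs) then 1 else 0 :: real) = (\<Sum>p<m. (if xs ! p = ob then 1 else 0 :: real))" by simp
    qed simp
    also have "\<dots> = (\<Sum>p<m. c p)" unfolding c_def by (rule sum.swap)
    also have "\<dots> = (\<Sum>p<m. c 0)" by (rule sum.cong[OF refl]) (rule cp, use m in simp)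
    finally show ?thesis by simp
  qed
  have "(\<Sum>xs\<in>P. (if ob \<in> set (take (card U) xs) then 1 else 0 :: real)) = real (card P)"
  proof -
    have "(\<Sum>xs\<in>P. (if ob \<in> set (take (card U) xs) then 1 else 0 :: real)) = (\<Sum>xs\<in>P. 1)"
    proof (rule sum.cong)
      fix xs assume xs: "xs \<in> P"
      have "take (card U) xs = xs" using permD(3)[OF xs] by simp
      then show "(if ob \<in> set (take (card U) xs) then 1 else 0 :: real) = 1" using permD(1)[OF xs] ob by simp
    qed simp
    then show ?thesis by simp
  qed
  then have "real (card U) * c 0 = real (card P)" using gen[of "card U"] by simp
  then have "c 0 = real (card P) / real (card U)" using n0 by (simp add: field_simps)
  then show ?thesis using gen[OF l] by simp
qed

lemma samp_pt:
  assumes d: "distinct os" "set os \<subseteq> U" and t: "t \<le> length os"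
  shows "v {} + (\<Sum>i<t. if os ! i \<in> R then v (set (take (Suc i) os)) - v (set (take i os)) else 0)
     \<le> v (set (take t os) \<inter> R)"
  using t
proof (induction t)
  case 0 then show ?case by simp
next
  case (Suc t)
  then have tl: "t < length os" by simp
  define ob where "ob = os ! t"
  define Ot where "Ot = set (take t os)"
  have tak: "take (Suc t) os = take t os @ [ob]" using tl ob_def by (simp add: take_Suc_conv_app_nth)
  have ts: "set (take (Suc t) os) = insert ob Ot" unfolding Ot_def using tak by simp
  have nin: "ob \<notin> Ot"
  proof -
    have "distinct (take (Suc t) os)" using d by simp
    then show ?thesis unfolding Ot_def tak by simp
  qed
  have OU: "Ot \<subseteq> U" unfolding Ot_def by (rule order_trans[OF set_take_subset d(2)])
  have obU: "ob \<in> U" unfolding ob_def using nth_mem[OF tl] d(2) by (rule set_mp[rotated])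
  have IH: "v {} + (\<Sum>i<t. if os ! i \<in> R then v (set (take (Suc i) os)) - v (set (take i os)) else 0) \<le> v (Ot \<inter> R)"
    unfolding Ot_def by (rule Suc.IH) (use tl in simp)
  have split: "(\<Sum>i<Suc t. if os ! i \<in> R then v (set (take (Suc i) os)) - v (set (take i os)) else 0)
     = (\<Sum>i<t. if os ! i \<in> R then v (set (take (Suc i) os)) - v (set (take i os)) else 0)
       + (if ob \<in> R then v (insert ob Ot) - v Ot else 0)"
    by (simp only: sum.lessThan_Suc ts ob_def Ot_def)
  show ?case
  proof (cases "ob \<in> R")
    case True
    have X: "insert ob (Ot \<inter> R) \<subseteq> U" "Ot \<subseteq> U" using OU obU by auto
    have u: "insert ob (Ot \<inter> R) \<union> Ot = insert ob Ot" by auto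
    have i: "insert ob (Ot \<inter> R) \<inter> Ot = Ot \<inter> R" using nin by auto
    have s: "v (insert ob Ot) + v (Ot \<inter> R) \<le> v (insert ob (Ot \<inter> R)) + v Ot"
      using sub'[OF X] unfolding u i .
    have e: "set (take (Suc t) os) \<inter> R = insert ob (Ot \<inter> R)" using ts True by auto
    show ?thesis unfolding e split using IH s True by simp
  next
    case False
    have e: "set (take (Suc t) os) \<inter> R = Ot \<inter> R" using ts False by auto
    show ?thesis unfolding e split using IH False by simp
  qed
qed

lemma exp_opt:
  assumes l: "l \<le> card U"
  shows "real l * real (card P) / real (card U) * v OPT \<le> (\<Sum>xs\<in>P. v (OPT \<inter> set (take l xs)))"
proof -
  obtain os where os: "set os = OPT" "distinct os"
    using finite_distinct_list finite_subset[OF OPT_sub finU] by blast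
  define d where "d i = v (set (take (Suc i) os)) - v (set (take i os))" for i
  define m where "m = length os"
  define q where "q = real l * real (card P) / real (card U)"
  have osU: "set os \<subseteq> U" using os OPT_sub by simp
  have pt: "v {} + (\<Sum>i<m. d i * (if os ! i \<in> set (take l xs) then 1 else 0)) \<le> v (OPT \<inter> set (take l xs))"
    for xs
  proof -
    have "(\<Sum>i<m. d i * (if os ! i \<in> set (take l xs) then 1 else 0)) =
        (\<Sum>i<m. if os ! i \<in> set (take l xs) then v (set (take (Suc i) os)) - v (set (take i os)) else 0)"
      by (rule sum.cong) (auto simp: d_def)
    moreover have "set (take m os) \<inter> set (take l xs) = OPT \<inter> set (take l xs)" using os m_def by simp
    ultimately show ?thesis using samp_pt[OF os(2) osU, of m "set (take l xs)"] m_def by simp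
  qed
  have "(\<Sum>xs\<in>P. v {} + (\<Sum>i<m. d i * (if os ! i \<in> set (take l xs) then 1 else 0)))
      = real (card P) * v {} + (\<Sum>i<m. d i * (\<Sum>xs\<in>P. (if os ! i \<in> set (take l xs) then 1 else 0)))"
  proof -
    have "(\<Sum>xs\<in>P. v {} + (\<Sum>i<m. d i * (if os ! i \<in> set (take l xs) then 1 else 0)))
       = real (card P) * v {} + (\<Sum>xs\<in>P. \<Sum>i<m. d i * (if os ! i \<in> set (take l xs) then 1 else 0))"
      by (simp add: sum.distrib)
    also have "(\<Sum>xs\<in>P. \<Sum>i<m. d i * (if os ! i \<in> set (take l xs) then 1 else 0))
       = (\<Sum>i<m. \<Sum>xs\<in>P. d i * (if os ! i \<in> set (take l xs) then 1 else 0))" by (rule sum.swap)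
    also have "\<dots> = (\<Sum>i<m. d i * (\<Sum>xs\<in>P. (if os ! i \<in> set (take l xs) then 1 else 0)))"
      by (simp add: sum_distrib_left)
    finally show ?thesis .
  qed
  also have "\<dots> = real (card P) * v {} + (\<Sum>i<m. d i * q)"
  proof -
    have "(\<Sum>xs\<in>P. (if os ! i \<in> set (take l xs) then 1 else 0)) = q" if i: "i < m" for i
    proof -
      have "os ! i \<in> U" using i m_def osU by auto
      then show ?thesis unfolding q_def by (rule incl[OF _ l])
    qed
    then show ?thesis by simp
  qed
  also have "(\<Sum>i<m. d i * q) = q * (v OPT - v {})"
  proof -
    have "(\<Sum>i<m. d i) = v (set (take m os)) - v (set (take 0 os))"
      unfolding d_def by (rule sum_lessThan_telescope)
    then have "(\<Sum>i<m. d i) = v OPT - v {}" using os m_def by simp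
    then show ?thesis by (simp add: sum_distrib_left[symmetric] mult.commute)
  qed
  finally have S: "(\<Sum>xs\<in>P. v {} + (\<Sum>i<m. d i * (if os ! i \<in> set (take l xs) then 1 else 0)))
      = real (card P) * v {} + q * (v OPT - v {})" .
  have "(\<Sum>xs\<in>P. v {} + (\<Sum>i<m. d i * (if os ! i \<in> set (take l xs) then 1 else 0)))
      \<le> (\<Sum>xs\<in>P. v (OPT \<inter> set (take l xs)))" by (rule sum_mono) (rule pt)
  moreover have "q \<le> real (card P)"
  proof (cases "card U = 0")
    case True then show ?thesis unfolding q_def by simp
  next
    case False
    then have "real l / real (card U) \<le> 1" using l by simp
    then have "real l / real (card U) * real (card P) \<le> 1 * real (card P)" by (intro mult_right_mono) auto
    then show ?thesis unfolding q_def by simp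
  qed
  moreover have "0 \<le> v {}" using v_nonneg by simp
  ultimately have "q * v OPT \<le> (\<Sum>xs\<in>P. v (OPT \<inter> set (take l xs)))"
    using S mult_right_mono[of q "real (card P)" "v {}"] by (simp add: algebra_simps)
  then show ?thesis unfolding q_def .
qed

lemma algU: "xs \<in> P \<Longrightarrow> alg A xs l r \<subseteq> U"
  using alg_subset permD(1) by metis

lemma recur:
  assumes l: "1 \<le> l" "l \<le> card U" and r: "1 \<le> r"
  shows "(real l - real k) * (\<Sum>xs\<in>P. v (alg A xs (l+1) r))
       + (real k - 1) * (\<Sum>xs\<in>P. v (alg A xs (l+1) (r-1)))
       + \<alpha> * (real l * real (card P) / real (card U) * v OPT)
     \<le> real l * (\<Sum>xs\<in>P. v (alg A xs l r))"
proof -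
  define g where "g xs j = (if j \<in> A (set (take l xs)) then v (insert j (alg A xs (l+1) (r-1)))
      else v (alg A xs (l+1) r))" for xs j
  have e1: "v (alg A xs l r) = g xs (xs ! (l-1))" if xs: "xs \<in> P" for xs
  proof -
    have "\<not> (r = 0 \<or> l = 0 \<or> length xs < l)" using l r permD(3)[OF xs] by simp
    then have "alg A xs l r = (if xs ! (l-1) \<in> A (set (take l xs)) then insert (xs ! (l-1)) (alg A xs (l + 1) (r - 1))
            else alg A xs (l + 1) r)" by (subst alg.simps) (simp only: Let_def if_False)
    then show ?thesis unfolding g_def by simp
  qed
  have inv: "g (sw p (l-1) xs) j = g xs j" if xs: "xs \<in> P" and p: "p < l" for xs p j
  proof -
    have len: "length xs = card U" using permD(3)[OF xs] .
    have st: "set (take l (sw p (l-1) xs)) = set (take l xs)"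
      by (rule sw_take) (use p l len in auto)
    have al: "alg A (sw p (l-1) xs) (l+1) r' = alg A xs (l+1) r'" for r'
    proof (rule alg_local)
      show "\<forall>i. l + 1 \<le> i \<longrightarrow> i \<le> length xs \<longrightarrow>
          set (take i (sw p (l-1) xs)) = set (take i xs) \<and> sw p (l-1) xs ! (i-1) = xs ! (i-1)"
      proof (intro allI impI conjI)
        fix i assume i: "l + 1 \<le> i" "i \<le> length xs"
        show "set (take i (sw p (l-1) xs)) = set (take i xs)" by (rule sw_take) (use i p in auto)
        have ne: "i - 1 \<noteq> p" "i - 1 \<noteq> l - 1" using i p l by auto
        show "sw p (l-1) xs ! (i-1) = xs ! (i-1)" using i p l len ne by (simp add: sw_nth)
      qed
    qed simp_all
    show ?thesis unfolding g_def st al ..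
  qed
  have S1: "real l * (\<Sum>xs\<in>P. v (alg A xs l r)) = (\<Sum>xs\<in>P. \<Sum>j\<in>set (take l xs). g xs j)"
  proof -
    have "(\<Sum>xs\<in>P. v (alg A xs l r)) = (\<Sum>xs\<in>P. g xs (xs ! (l-1)))" by (rule sum.cong) (simp_all add: e1)
    then show ?thesis using exch[OF l, of g] inv by simp
  qed
  have pt: "(real l - real k) * v (alg A xs (l+1) r) + (real k - 1) * v (alg A xs (l+1) (r-1))
      + \<alpha> * v (OPT \<inter> set (take l xs)) \<le> (\<Sum>j\<in>set (take l xs). g xs j)" if xs: "xs \<in> P" for xs
  proof -
    define L where "L = set (take l xs)"
    define a where "a = A L"
    define S' where "S' = alg A xs (l+1) (r-1)"
    define Sr where "Sr = alg A xs (l+1) r"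
    define c where "c = card a"
    have LU: "L \<subseteq> U" unfolding L_def by (rule order_trans[OF set_take_subset]) (simp add: permD(1)[OF xs])
    have finL: "finite L" unfolding L_def by simp
    have cardL: "card L = l" unfolding L_def using permD[OF xs] l by (simp add: distinct_card)
    have aL: "a \<subseteq> L" unfolding a_def by (rule A_sub[OF LU])
    have finA: "finite a" using finite_subset[OF aL finL] .
    have aU: "a \<subseteq> U" using aL LU by (rule order_trans)
    have ck: "c \<le> k" unfolding c_def a_def by (rule A_card[OF LU])
    have cl: "c \<le> l" unfolding c_def using card_mono[OF finL aL] cardL by simp
    have S'U: "S' \<subseteq> U" unfolding S'_def by (rule algU[OF xs])
    have SrU: "Sr \<subseteq> U" unfolding Sr_def by (rule algU[OF xs])
    have S'Sr: "S' \<subseteq> Sr" unfolding S'_def Sr_def using alg_mono[of A xs "l+1" "r-1"] r by simp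
    have vS: "v S' \<le> v Sr" by (rule mono'[OF S'Sr SrU])
    have F1: "(\<Sum>j\<in>L. g xs j) = (\<Sum>j\<in>a. v (insert j S')) + (real l - real c) * v Sr"
    proof -
      have "(\<Sum>j\<in>L. g xs j) = (\<Sum>j\<in>L - a. g xs j) + (\<Sum>j\<in>a. g xs j)"
        by (rule sum.subset_diff[OF aL finL])
      also have "(\<Sum>j\<in>L - a. g xs j) = (\<Sum>j\<in>L - a. v Sr)"
        by (rule sum.cong) (auto simp: g_def L_def[symmetric] a_def[symmetric] Sr_def)
      also have "\<dots> = real (card (L - a)) * v Sr" by simp
      also have "card (L - a) = l - c" unfolding c_def using card_Diff_subset[OF finA aL] cardL by simp
      also have "(\<Sum>j\<in>a. g xs j) = (\<Sum>j\<in>a. v (insert j S'))"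
        by (rule sum.cong) (auto simp: g_def L_def[symmetric] a_def[symmetric] S'_def)
      finally show ?thesis using cl by (simp add: of_nat_diff)
    qed
    have F2: "real c * v S' + v (a \<union> S') - v S' \<le> (\<Sum>j\<in>a. v (insert j S'))"
    proof -
      have "v (a \<union> S') - v S' \<le> (\<Sum>j\<in>a. v (insert j S') - v S')" by (rule submod_sum[OF finA aU S'U])
      also have "\<dots> = (\<Sum>j\<in>a. v (insert j S')) - real c * v S'" unfolding c_def by (simp add: sum_subtractf)
      finally show ?thesis by simp
    qed
    have F3: "\<alpha> * v (OPT \<inter> L) \<le> v (a \<union> S')"
    proof -
      have "card (OPT \<inter> L) \<le> k" using card_mono[OF finite_subset[OF OPT_sub finU], of "OPT \<inter> L"] OPT_card by simp
      then have "\<alpha> * v (OPT \<inter> L) \<le> v a" unfolding a_def by (intro A_approx[OF LU]) auto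
      also have "v a \<le> v (a \<union> S')" by (rule mono') (use aU S'U in auto)
      finally show ?thesis .
    qed
    have F4: "0 \<le> (real k - real c) * (v Sr - v S')" using ck vS by simp
    have F4': "real c * v Sr + real k * v S' \<le> real k * v Sr + real c * v S'"
      using F4 by (simp add: algebra_simps)
    show ?thesis unfolding L_def[symmetric] S'_def[symmetric] Sr_def[symmetric] F1
      using F2 F3 F4' by (simp only: left_diff_distrib)
  qed
  have "(\<Sum>xs\<in>P. (real l - real k) * v (alg A xs (l+1) r) + (real k - 1) * v (alg A xs (l+1) (r-1))
      + \<alpha> * v (OPT \<inter> set (take l xs))) \<le> (\<Sum>xs\<in>P. \<Sum>j\<in>set (take l xs). g xs j)"
    by (rule sum_mono) (rule pt)
  also have "(\<Sum>xs\<in>P. (real l - real k) * v (alg A xs (l+1) r) + (real k - 1) * v (alg A xs (l+1) (r-1))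
      + \<alpha> * v (OPT \<inter> set (take l xs))) = (real l - real k) * (\<Sum>xs\<in>P. v (alg A xs (l+1) r))
       + (real k - 1) * (\<Sum>xs\<in>P. v (alg A xs (l+1) (r-1))) + \<alpha> * (\<Sum>xs\<in>P. v (OPT \<inter> set (take l xs)))"
    by (simp add: sum.distrib sum_distrib_left)
  finally have T: "(real l - real k) * (\<Sum>xs\<in>P. v (alg A xs (l+1) r))
       + (real k - 1) * (\<Sum>xs\<in>P. v (alg A xs (l+1) (r-1))) + \<alpha> * (\<Sum>xs\<in>P. v (OPT \<inter> set (take l xs)))
     \<le> real l * (\<Sum>xs\<in>P. v (alg A xs l r))" unfolding S1 .
  have "\<alpha> * (real l * real (card P) / real (card U) * v OPT) \<le> \<alpha> * (\<Sum>xs\<in>P. v (OPT \<inter> set (take l xs)))"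
    using exp_opt[OF l(2)] \<alpha>_pos by (intro mult_left_mono) auto
  then show ?thesis using T by linarith
qed

lemma main_bound:
  "\<forall>l r. card U - l = d \<longrightarrow> k \<le> l \<longrightarrow> l \<le> card U \<longrightarrow>
     real (card P) * (\<alpha> * v OPT / (real k - 1)) * (hh k r (real l / real (card U)) - 3 * real k ^ 2 * real r / real (card U))
     \<le> (\<Sum>xs\<in>P. v (alg A xs l r))"
proof (induction d)
  define B where "B = real (card P) * (\<alpha> * v OPT / (real k - 1))"
  have vO: "0 \<le> v OPT" by (rule v_nonneg[OF OPT_sub])
  have k1: "0 < real k - 1" using k2 by simp
  have B0: "0 \<le> B" unfolding B_def using vO k1 \<alpha>_pos by simp
  have Fs0: "0 \<le> (\<Sum>xs\<in>P. v (alg A xs l r))" for l r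
    by (rule sum_nonneg) (rule v_nonneg[OF algU])
  {
    case 0
    show ?case
    proof (intro allI impI)
      fix l r assume a: "card U - l = 0" "k \<le> l" "l \<le> card U"
      then have ln: "l = card U" by simp
      have n0: "0 < real (card U)" using a k2 by simp
      have "real l / real (card U) = 1" using ln n0 by simp
      then have "hh k r (real l / real (card U)) = 0" by (simp add: hh_one)
      moreover have "0 \<le> 3 * real k ^ 2 * real r / real (card U)" by simp
      ultimately have "B * (hh k r (real l / real (card U)) - 3 * real k ^ 2 * real r / real (card U)) \<le> 0"
        using B0 by (simp add: mult_nonneg_nonpos)
      then show "real (card P) * (\<alpha> * v OPT / (real k - 1)) * (hh k r (real l / real (card U)) - 3 * real k ^ 2 * real r / real (card U))
         \<le> (\<Sum>xs\<in>P. v (alg A xs l r))" using Fs0[of l r] unfolding B_def by linarith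
    qed
  next
    case (Suc d)
    show ?case
    proof (intro allI impI)
      fix l r assume a: "card U - l = Suc d" "k \<le> l" "l \<le> card U"
      have ln: "l < card U" using a by simp
      have l1: "1 \<le> l" using a k2 by simp
      show "real (card P) * (\<alpha> * v OPT / (real k - 1)) * (hh k r (real l / real (card U)) - 3 * real k ^ 2 * real r / real (card U))
         \<le> (\<Sum>xs\<in>P. v (alg A xs l r))"
      proof (cases "r = 0")
        case True
        then show ?thesis using Fs0[of l r] by (simp add: hh_zero_r)
      next
        case False
        then have r1: "1 \<le> r" by simp
        define G0 where "G0 = hh k r (real l / real (card U)) - 3 * real k ^ 2 * real r / real (card U)"
        define G1 where "G1 = hh k r (real (l+1) / real (card U)) - 3 * real k ^ 2 * real r / real (card U)"
        define G2 where "G2 = hh k (r-1) (real (l+1) / real (card U)) - 3 * real k ^ 2 * real (r-1) / real (card U)"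
        define F0 where "F0 = (\<Sum>xs\<in>P. v (alg A xs l r))"
        define F1 where "F1 = (\<Sum>xs\<in>P. v (alg A xs (l+1) r))"
        define F2 where "F2 = (\<Sum>xs\<in>P. v (alg A xs (l+1) (r-1)))"
        have I1: "B * G1 \<le> F1" unfolding B_def G1_def F1_def
          by (rule Suc.IH[rule_format]) (use a ln in auto)
        have I2: "B * G2 \<le> F2" unfolding B_def G2_def F2_def
          by (rule Suc.IH[rule_format]) (use a ln in auto)
        have rec: "(real l - real k) * F1 + (real k - 1) * F2
            + \<alpha> * (real l * real (card P) / real (card U) * v OPT) \<le> real l * F0"
          unfolding F0_def F1_def F2_def by (rule recur[OF l1 a(3) r1])
        have key: "real l * G0 \<le> (real l - real k) * G1 + (real k - 1) * G2 + (real k - 1) * real l / real (card U)"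
          unfolding G0_def G1_def G2_def by (rule key_ineq[OF k2 r1 a(2) ln])
        have m1: "B * (real l * G0) \<le> B * ((real l - real k) * G1 + (real k - 1) * G2 + (real k - 1) * real l / real (card U))"
          using key B0 by (rule mult_left_mono)
        have lk: "0 \<le> real l - real k" using a by simp
        have m2: "(real l - real k) * (B * G1) \<le> (real l - real k) * F1" using I1 lk by (rule mult_left_mono)
        have m3: "(real k - 1) * (B * G2) \<le> (real k - 1) * F2" using I2 k1 by (intro mult_left_mono) auto
        have eq1: "B * ((real l - real k) * G1 + (real k - 1) * G2 + (real k - 1) * real l / real (card U))
           = (real l - real k) * (B * G1) + (real k - 1) * (B * G2) + \<alpha> * (real l * real (card P) / real (card U) * v OPT)"
        proof -
          have Bk: "B * (real k - 1) = real (card P) * (\<alpha> * v OPT)" unfolding B_def using k1 by simp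
          have "B * ((real l - real k) * G1 + (real k - 1) * G2 + (real k - 1) * real l / real (card U))
             = (real l - real k) * (B * G1) + (real k - 1) * (B * G2) + (B * (real k - 1)) * real l / real (card U)"
            by (simp add: algebra_simps)
          also have "(B * (real k - 1)) * real l / real (card U) = \<alpha> * (real l * real (card P) / real (card U) * v OPT)"
            unfolding Bk by simp
          finally show ?thesis .
        qed
        have eq2: "B * (real l * G0) = real l * (B * G0)" by simp
        have "real l * (B * G0) \<le> real l * F0" using m1 m2 m3 eq1 eq2 rec by linarith
        then have "B * G0 \<le> F0" using l1 by simp
        then show ?thesis unfolding B_def G0_def F0_def .
      qed
    qed
  }
qed

end

lemma rhs_eq:
  fixes n l k r :: nat and a b :: real
  assumes n: "0 < n" and l: "0 < l" and k: "k \<ge> 2"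
  shows "(real r * real l / ((real k - 1) * real n)
        - 1 / (real k - 1) * (real l / real n) ^ k
          * (\<Sum>r'<r. \<Sum>i\<le>r'. (real k - 1) ^ i / fact i * (ln (real n / real l)) ^ i)
        - 3 * real k ^ 2 * real r / ((real k - 1) * real n)) * a * b
     = a * b / (real k - 1) * (hh k r (real l / real n) - 3 * real k ^ 2 * real r / real n)"
proof -
  have lnq: "- ln (real l / real n) = ln (real n / real l)" using n l by (simp add: ln_div)
  have S: "(\<Sum>r'<r. \<Sum>i\<le>r'. (real k - 1) ^ i / fact i * (ln (real n / real l)) ^ i) = Sr k r (real l / real n)"
    unfolding Sr_def Pe_def lnq
    by (intro sum.cong refl) (simp add: power_mult_distrib)
  have k1: "real k - 1 \<noteq> 0" using k by simp
  define q where "q = real l / real n"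
  define x where "x = real r * q"
  define y where "y = q ^ k * Sr k r q"
  define z where "z = 3 * real k ^ 2 * real r / real n"
  have e1: "real r * real l / ((real k - 1) * real n) = x / (real k - 1)" unfolding x_def q_def by simp
  have e2: "3 * real k ^ 2 * real r / ((real k - 1) * real n) = z / (real k - 1)" unfolding z_def by simp
  have e3: "1 / (real k - 1) * (real l / real n) ^ k * Sr k r (real l / real n) = y / (real k - 1)"
    unfolding y_def q_def by simp
  have gen: "(x / (real k - 1) - y / (real k - 1) - z / (real k - 1)) * a * b = a * b / (real k - 1) * (x - y - z)"
  proof -
    have "x / (real k - 1) - y / (real k - 1) - z / (real k - 1) = (x - y - z) / (real k - 1)"
      by (simp add: diff_divide_distrib)
    moreover have "(x - y - z) / (real k - 1) * a * b = a * b / (real k - 1) * (x - y - z)"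
      by (simp add: divide_inverse ac_simps)
    ultimately show ?thesis by simp
  qed
  have e4: "hh k r (real l / real n) = x - y" unfolding hh_def x_def y_def q_def by simp
  show ?thesis unfolding S e1 e2 e3 e4 using gen unfolding z_def .
qed

theorem mainTheorem4:
  fixes U :: "'a set" and n k :: nat and v :: "'a set \<Rightarrow> real"
    and A :: "'a set \<Rightarrow> 'a set" and \<alpha> :: real and OPT :: "'a set"
  assumes finU: "finite U" and n_def: "n = card U"
    and k2: "k \<ge> 2"
    and v_nonneg: "\<And>S. S \<subseteq> U \<Longrightarrow> v S \<ge> 0"
    and v_mono: "monotone_setfun U v"
    and v_sub: "submodular_setfun U v"
    and OPT_sub: "OPT \<subseteq> U" and OPT_card: "card OPT \<le> k"
    and OPT_max: "\<And>S. S \<subseteq> U \<Longrightarrow> card S \<le> k \<Longrightarrow> v S \<le> v OPT"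
    and \<alpha>_pos: "0 < \<alpha>" and \<alpha>_le1: "\<alpha> \<le> 1"
    and A_sub: "\<And>L. L \<subseteq> U \<Longrightarrow> A L \<subseteq> L"
    and A_card: "\<And>L. L \<subseteq> U \<Longrightarrow> card (A L) \<le> k"
    and A_approx: "\<And>L T. L \<subseteq> U \<Longrightarrow> T \<subseteq> L \<Longrightarrow> card T \<le> k \<Longrightarrow> v (A L) \<ge> \<alpha> * v T"
  shows "\<forall>l r. 1 \<le> l \<and> l \<le> n \<and> l \<ge> k^2 + k \<and> r \<le> k \<longrightarrow>
    measure_pmf.expectation (pmf_of_set (permutations_of_set U)) (\<lambda>xs. v (alg A xs l r))
    \<ge> (real r * real l / ((real k - 1) * real n)
        - 1 / (real k - 1) * (real l / real n) ^ k
          * (\<Sum>r'<r. \<Sum>i\<le>r'. (real k - 1) ^ i / fact i * (ln (real n / real l)) ^ i)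
        - 3 * real k ^ 2 * real r / ((real k - 1) * real n)) * \<alpha> * v OPT"
proof -
  interpret sm U k v A \<alpha> OPT
    using finU k2 v_nonneg v_mono v_sub OPT_sub OPT_card \<alpha>_pos A_sub A_card A_approx by (rule sm.intro)
  show ?thesis
  proof (intro allI impI)
    fix l r assume a: "1 \<le> l \<and> l \<le> n \<and> l \<ge> k^2 + k \<and> r \<le> k"
    have kl: "k \<le> l" using a by simp
    have ln: "l \<le> card U" using a n_def by simp
    have mb: "real (card P) * (\<alpha> * v OPT / (real k - 1)) * (hh k r (real l / real (card U)) - 3 * real k ^ 2 * real r / real (card U))
      \<le> (\<Sum>xs\<in>P. v (alg A xs l r))"
      using spec[OF spec[OF main_bound[where d="card U - l"], of l], of r] kl ln by simp
    have ne: "P \<noteq> {}" using finU by simp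
    have fin: "finite P" by simp
    have N0: "0 < real (card P)" using ne fin by (simp add: card_gt_0_iff)
    have ex: "measure_pmf.expectation (pmf_of_set P) (\<lambda>xs. v (alg A xs l r)) = (\<Sum>xs\<in>P. v (alg A xs l r)) / real (card P)"
      by (rule integral_pmf_of_set[OF ne fin])
    have n0: "0 < n" using a by simp
    have l0: "0 < l" using a by simp
    have rh: "(real r * real l / ((real k - 1) * real n)
        - 1 / (real k - 1) * (real l / real n) ^ k
          * (\<Sum>r'<r. \<Sum>i\<le>r'. (real k - 1) ^ i / fact i * (ln (real n / real l)) ^ i)
        - 3 * real k ^ 2 * real r / ((real k - 1) * real n)) * \<alpha> * v OPT
      = \<alpha> * v OPT / (real k - 1) * (hh k r (real l / real n) - 3 * real k ^ 2 * real r / real n)"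
      by (rule rhs_eq[OF n0 l0 k2])
    have "\<alpha> * v OPT / (real k - 1) * (hh k r (real l / real n) - 3 * real k ^ 2 * real r / real n)
       \<le> (\<Sum>xs\<in>P. v (alg A xs l r)) / real (card P)"
      using mb N0 n_def by (simp add: pos_le_divide_eq mult.commute mult.left_commute)
    then show "measure_pmf.expectation (pmf_of_set (permutations_of_set U)) (\<lambda>xs. v (alg A xs l r))
    \<ge> (real r * real l / ((real k - 1) * real n)
        - 1 / (real k - 1) * (real l / real n) ^ k
          * (\<Sum>r'<r. \<Sum>i\<le>r'. (real k - 1) ^ i / fact i * (ln (real n / real l)) ^ i)
        - 3 * real k ^ 2 * real r / ((real k - 1) * real n)) * \<alpha> * v OPT"
      unfolding rh ex .
  qed
qed

end
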